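(* Let $G_1,\dots,G_k$ be graphs that are pairwise QASST equivalent and pairwise not locally equivalent, and suppose every graph QASST equivalent to $G_1$ is locally equivalent to one of $G_1,\dots,G_k$. Then $|\mathcal{O}(G_1)|+\cdots+|\mathcal{O}(G_k)|=\Phi(G_1)$.
   Context: Graphs are finite, simple, connected, on a fixed labelled vertex set. The local complement $c_v(G)$ replaces the induced subgraph on the neighbourhood of $v$ by its complement; graphs are locally equivalent if related by a finite sequence of local complements, and $\mathcal{O}(G)$ is the set of graphs locally equivalent to $G$ (labelled graphs). A split is a bipartition $V=A\sqcup B$ with the $A$–$B$ edges forming a complete bipartite graph between the vertices having neighbours across; it is strong if no other split crosses it. Cutting along all nontrivial strong splits (each side plus a new paired marker vertex adjacent to the vertices having neighbours across) yields a tree whose nodes are labelled by quotient graphs. Two graphs are QASST equivalent if they have the same strong splits and corresponding quotient graphs are locally equivalent. $\Phi(G)$ is the number of graphs QASST equivalent to $G$. *)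

theory Defs
  imports Main
begin

text \<open>Graphs on a fixed finite labelled vertex set V are represented by their
  (symmetric, irreflexive) edge relation E.\<close>

definition is_graph :: "'a set \<Rightarrow> ('a \<times> 'a) set \<Rightarrow> bool" where
  "is_graph V E \<longleftrightarrow> E \<subseteq> V \<times> V \<and> sym E \<and> (\<forall>x. (x, x) \<notin> E)
     \<and> (\<forall>x\<in>V. \<forall>y\<in>V. (x, y) \<in> E\<^sup>*)"

definition nbhd :: "('a \<times> 'a) set \<Rightarrow> 'a \<Rightarrow> 'a set" where
  "nbhd E v = {x. (v, x) \<in> E}"

definition local_compl :: "'a \<Rightarrow> ('a \<times> 'a) set \<Rightarrow> ('a \<times> 'a) set" where
  "local_compl v E = E - {(x, y). x \<in> nbhd E v \<and> y \<in> nbhd E v \<and> x \<noteq> y}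
     \<union> ({(x, y). x \<in> nbhd E v \<and> y \<in> nbhd E v \<and> x \<noteq> y} - E)"

definition loc_equiv :: "'a set \<Rightarrow> ('a \<times> 'a) set \<Rightarrow> ('a \<times> 'a) set \<Rightarrow> bool" where
  "loc_equiv V G H \<longleftrightarrow> (G, H) \<in> {(E, local_compl v E) | E v. v \<in> V}\<^sup>*"

definition orbit :: "'a set \<Rightarrow> ('a \<times> 'a) set \<Rightarrow> ('a \<times> 'a) set set" where
  "orbit V G = {H. loc_equiv V G H}"

text \<open>A split is represented by either of its sides.\<close>
definition is_split :: "'a set \<Rightarrow> ('a \<times> 'a) set \<Rightarrow> 'a set \<Rightarrow> bool" where
  "is_split V E A \<longleftrightarrow> A \<subseteq> V \<and> A \<noteq> {} \<and> V - A \<noteq> {} \<and>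
     (\<forall>x\<in>A. \<forall>y\<in>V - A.
        ((\<exists>y'\<in>V - A. (x, y') \<in> E) \<and> (\<exists>x'\<in>A. (x', y) \<in> E)) \<longrightarrow> (x, y) \<in> E)"

definition crosses :: "'a set \<Rightarrow> 'a set \<Rightarrow> 'a set \<Rightarrow> bool" where
  "crosses V A C \<longleftrightarrow> A \<inter> C \<noteq> {} \<and> A \<inter> (V - C) \<noteq> {} \<and>
     (V - A) \<inter> C \<noteq> {} \<and> (V - A) \<inter> (V - C) \<noteq> {}"

definition strong_split :: "'a set \<Rightarrow> ('a \<times> 'a) set \<Rightarrow> 'a set \<Rightarrow> bool" where
  "strong_split V E A \<longleftrightarrow> is_split V E A \<and> (\<forall>C. is_split V E C \<longrightarrow> \<not> crosses V A C)"

definition strong_splits :: "'a set \<Rightarrow> ('a \<times> 'a) set \<Rightarrow> 'a set set" where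
  "strong_splits V E = {A. strong_split V E A}"

definition nt_strong_sides :: "'a set \<Rightarrow> ('a \<times> 'a) set \<Rightarrow> 'a set set" where
  "nt_strong_sides V E = {A. strong_split V E A \<and> card A \<ge> 2 \<and> card (V - A) \<ge> 2}"

definition is_partition :: "'a set \<Rightarrow> 'a set set \<Rightarrow> bool" where
  "is_partition V P \<longleftrightarrow> {} \<notin> P \<and> \<Union>P = V \<and>
     (\<forall>X\<in>P. \<forall>Y\<in>P. X \<noteq> Y \<longrightarrow> X \<inter> Y = {})"

text \<open>A node u is encoded by the
  partition of V given by the edges of the tree incident with u: the part of
  an incident edge is the set of leaves (original vertices) beyond that edge.
  A part {v} is the original vertex v; any other part X is a marker vertex,
  namely the marker created when cutting along the strong split {X, V - X},
  on the side not containing X.  These partitions are exactly those whose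
  parts are singletons or sides of nontrivial strong splits, in which every
  nontrivial strong split has a side inside a single part, and which have at
  least three parts (internal nodes have degree \<ge> 3), except that for
  |V| \<le> 2 the decomposition is a single node.\<close>
definition split_nodes :: "'a set \<Rightarrow> ('a \<times> 'a) set \<Rightarrow> 'a set set set" where
  "split_nodes V E = {P. is_partition V P \<and>
     (\<forall>X\<in>P. card X = 1 \<or> X \<in> nt_strong_sides V E) \<and>
     (\<forall>S\<in>nt_strong_sides V E. \<exists>X\<in>P. S \<subseteq> X \<or> V - S \<subseteq> X) \<and>
     (card P \<ge> 3 \<or> card V \<le> 2)}"

text \<open>Quotient graph at the node P: vertices are the parts (original vertices
  and markers); two of them are adjacent iff some edge of G joins the
  corresponding vertex sets (this is the adjacency produced by the marker
  construction: markers are adjacent to the vertices having neighbours across).\<close>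
definition quotient_graph :: "('a \<times> 'a) set \<Rightarrow> 'a set set \<Rightarrow> ('a set \<times> 'a set) set" where
  "quotient_graph E P = {(X, Y). X \<in> P \<and> Y \<in> P \<and> X \<noteq> Y \<and> (\<exists>x\<in>X. \<exists>y\<in>Y. (x, y) \<in> E)}"

definition qasst_equiv :: "'a set \<Rightarrow> ('a \<times> 'a) set \<Rightarrow> ('a \<times> 'a) set \<Rightarrow> bool" where
  "qasst_equiv V G H \<longleftrightarrow> is_graph V G \<and> is_graph V H \<and>
     strong_splits V G = strong_splits V H \<and>
     (\<forall>P\<in>split_nodes V G. loc_equiv P (quotient_graph G P) (quotient_graph H P))"

definition Phi :: "'a set \<Rightarrow> ('a \<times> 'a) set \<Rightarrow> nat" where
  "Phi V G = card {H. qasst_equiv V G H}"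

end

theory Submission
  imports Defs
begin


lemma lc_mem: "(x,y) \<in> local_compl v E \<longleftrightarrow> (((x,y)\<in>E) \<noteq> ((v,x)\<in>E \<and> (v,y)\<in>E \<and> x \<noteq> y))"
  by (auto simp: local_compl_def nbhd_def)

lemma lc_nbhd: "(v,v)\<notin>E \<Longrightarrow> (v,x) \<in> local_compl v E \<longleftrightarrow> (v,x)\<in>E"
  by (auto simp: lc_mem)

lemma lc_invol: "(v,v)\<notin>E \<Longrightarrow> local_compl v (local_compl v E) = E"
  apply (rule set_eqI) subgoal for p by (cases p) (auto simp: lc_mem)
  done

lemma lc_sym: "sym E \<Longrightarrow> sym (local_compl v E)"
  unfolding sym_def by (auto simp: lc_mem)

lemma lc_irr: "\<forall>x. (x,x)\<notin>E \<Longrightarrow> \<forall>x. (x,x)\<notin> local_compl v E"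
  by (auto simp: lc_mem)

lemma lc_sub: "E \<subseteq> V \<times> V \<Longrightarrow> local_compl v E \<subseteq> V \<times> V"
  by (auto simp: local_compl_def nbhd_def)

lemma lc_conn:
  assumes "\<forall>x. (x,x)\<notin>E" "sym E"
  shows "E\<^sup>* \<subseteq> (local_compl v E)\<^sup>*"
proof -
  have "E \<subseteq> (local_compl v E)\<^sup>*"
  proof
    fix p assume p: "p \<in> E"
    obtain x y where xy: "p = (x,y)" by (cases p)
    show "p \<in> (local_compl v E)\<^sup>*"
    proof (cases "(x,y) \<in> local_compl v E")
      case True thus ?thesis using xy by auto
    next
      case False
      then have "(v,x)\<in>E" "(v,y)\<in>E" using p xy by (auto simp: lc_mem)
      then have "(x,v) \<in> local_compl v E" "(v,y) \<in> local_compl v E"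
        using assms lc_nbhd[of v E] lc_sym[OF assms(2), of v] by (auto simp: sym_def)
      thus ?thesis using xy by auto
    qed
  qed
  thus ?thesis by (simp add: rtrancl_subset_rtrancl)
qed

lemma lc_graph: "is_graph V E \<Longrightarrow> is_graph V (local_compl v E)"
  unfolding is_graph_def using lc_sym[of E v] lc_irr[of E v] lc_sub[of E V v] lc_conn[of E v] by blast



lemma split_prod: "is_split V E A \<longleftrightarrow> A\<subseteq>V \<and> A\<noteq>{} \<and> V-A\<noteq>{} \<and>
   (\<exists>p q. \<forall>x\<in>A. \<forall>y\<in>V-A. (x,y)\<in>E \<longleftrightarrow> p x \<and> q y)"
proof
  assume h: "is_split V E A"
  have h1: "\<forall>x\<in>A. \<forall>y\<in>V-A. (x,y)\<in>E \<longleftrightarrow> (\<exists>y'\<in>V - A. (x, y') \<in> E) \<and> (\<exists>x'\<in>A. (x', y) \<in> E)"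
  proof (intro ballI iffI)
    fix x y assume "x \<in> A" "y \<in> V - A" "(x,y)\<in>E"
    thus "(\<exists>y'\<in>V - A. (x, y') \<in> E) \<and> (\<exists>x'\<in>A. (x', y) \<in> E)" by blast
  next
    fix x y assume "x \<in> A" "y \<in> V - A" "(\<exists>y'\<in>V - A. (x, y') \<in> E) \<and> (\<exists>x'\<in>A. (x', y) \<in> E)"
    thus "(x,y)\<in>E" using h unfolding is_split_def by blast
  qed
  have h2: "\<exists>p q. \<forall>x\<in>A. \<forall>y\<in>V-A. (x,y)\<in>E \<longleftrightarrow> p x \<and> q y"
    using h1 by - (rule exI[where x="\<lambda>x. \<exists>y'\<in>V - A. (x, y') \<in> E"], rule exI[where x="\<lambda>y. \<exists>x'\<in>A. (x', y) \<in> E"], assumption)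
  show "A\<subseteq>V \<and> A\<noteq>{} \<and> V-A\<noteq>{} \<and> (\<exists>p q. \<forall>x\<in>A. \<forall>y\<in>V-A. (x,y)\<in>E \<longleftrightarrow> p x \<and> q y)"
    using h h2 unfolding is_split_def by (intro conjI) simp_all
next
  assume a: "A\<subseteq>V \<and> A\<noteq>{} \<and> V-A\<noteq>{} \<and> (\<exists>p q. \<forall>x\<in>A. \<forall>y\<in>V-A. (x,y)\<in>E \<longleftrightarrow> p x \<and> q y)"
  then obtain p q where pq: "\<forall>x\<in>A. \<forall>y\<in>V-A. (x,y)\<in>E \<longleftrightarrow> p x \<and> q y" by (elim conjE exE)
  show "is_split V E A" unfolding is_split_def
  proof (intro conjI ballI impI)
    show "A\<subseteq>V" "A\<noteq>{}" "V-A\<noteq>{}" using a by simp_all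
    fix x y assume xy: "x \<in> A" "y \<in> V - A" and e: "(\<exists>y'\<in>V - A. (x, y') \<in> E) \<and> (\<exists>x'\<in>A. (x', y) \<in> E)"
    from e obtain y' x' where "y'\<in>V-A" "(x,y')\<in>E" "x'\<in>A" "(x',y)\<in>E" by blast
    then have "p x" "q y" using pq xy by blast+
    thus "(x,y)\<in>E" using pq xy by blast
  qed
qed

lemma split_lc:
  assumes s: "sym E" and sub: "E \<subseteq> V \<times> V" and sp: "is_split V E A"
  shows "is_split V (local_compl v E) A"
proof -
  have spp: "A\<subseteq>V \<and> A\<noteq>{} \<and> V-A\<noteq>{} \<and>
   (\<exists>p q. \<forall>x\<in>A. \<forall>y\<in>V-A. (x,y)\<in>E \<longleftrightarrow> p x \<and> q y)" by (rule split_prod[THEN iffD1, OF sp])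
  have b: "A\<subseteq>V" "A\<noteq>{}" "V-A\<noteq>{}" using conjunct1[OF spp] conjunct1[OF conjunct2[OF spp]]
     conjunct1[OF conjunct2[OF conjunct2[OF spp]]] by simp_all
  from spp obtain p q where pq: "\<forall>x\<in>A. \<forall>y\<in>V-A. (x,y)\<in>E \<longleftrightarrow> p x \<and> q y"
     by (elim conjE exE)
  have "\<exists>p' q'. \<forall>x\<in>A. \<forall>y\<in>V-A. (x,y)\<in>local_compl v E \<longleftrightarrow> p' x \<and> q' y"
  proof (cases "v \<in> A")
    case True
    show ?thesis
    proof (cases "p v")
      case True
      have "\<forall>x\<in>A. \<forall>y\<in>V-A. (x,y)\<in>local_compl v E \<longleftrightarrow> (p x \<noteq> ((v,x)\<in>E)) \<and> q y"
        
      proof (intro ballI)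
        fix x y assume xy: "x\<in>A" "y\<in>V-A"
        have f0: "(x,y)\<in>E \<longleftrightarrow> p x \<and> q y" using pq xy by blast
        have f1: "(v,y)\<in>E \<longleftrightarrow> q y" using pq xy \<open>v\<in>A\<close> True by blast
        have fne: "x \<noteq> y" using xy by blast
        show "(x,y)\<in>local_compl v E \<longleftrightarrow> (p x \<noteq> ((v,x)\<in>E)) \<and> q y" using f0 f1 fne by (auto simp: lc_mem)
      qed
      thus ?thesis by - (rule exI[where x="\<lambda>x. p x \<noteq> ((v,x)\<in>E)"], rule exI[where x=q], assumption)
    next
      case False
      have "\<forall>x\<in>A. \<forall>y\<in>V-A. (x,y)\<in>local_compl v E \<longleftrightarrow> p x \<and> q y"
        
      proof (intro ballI)
        fix x y assume xy: "x\<in>A" "y\<in>V-A"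
        have f0: "(x,y)\<in>E \<longleftrightarrow> p x \<and> q y" using pq xy by blast
        have f1: "(v,y)\<notin>E" using pq xy \<open>v\<in>A\<close> False by blast
        have fne: "x \<noteq> y" using xy by blast
        show "(x,y)\<in>local_compl v E \<longleftrightarrow> p x \<and> q y" using f0 f1 fne by (auto simp: lc_mem)
      qed
      thus ?thesis by - (rule exI[where x=p], rule exI[where x=q], assumption)
    qed
  next
    case vA: False
    show ?thesis
    proof (cases "v \<in> V")
      case False
      then have "\<forall>x. (v,x)\<notin>E" using sub by auto
      then have "\<forall>x\<in>A. \<forall>y\<in>V-A. (x,y)\<in>local_compl v E \<longleftrightarrow> p x \<and> q y"
        
      proof (intro ballI)
        fix x y assume xy: "x\<in>A" "y\<in>V-A"
        have f0: "(x,y)\<in>E \<longleftrightarrow> p x \<and> q y" using pq xy by blast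
        have f1: "(v,y)\<notin>E" using \<open>\<forall>x. (v,x)\<notin>E\<close> by blast
        have fne: "x \<noteq> y" using xy by blast
        show "(x,y)\<in>local_compl v E \<longleftrightarrow> p x \<and> q y" using f0 f1 fne by (auto simp: lc_mem)
      qed
      thus ?thesis by - (rule exI[where x=p], rule exI[where x=q], assumption)
    next
      case True
      then have vB: "v \<in> V - A" using vA by auto
      have ex: "\<forall>x\<in>A. (v,x)\<in>E \<longleftrightarrow> p x \<and> q v"
      proof
        fix x assume "x \<in> A"
        then have "(x,v)\<in>E \<longleftrightarrow> p x \<and> q v" using pq vB by blast
        moreover have "(x,v)\<in>E \<longleftrightarrow> (v,x)\<in>E" using s by (auto simp: sym_def)
        ultimately show "(v,x)\<in>E \<longleftrightarrow> p x \<and> q v" by simp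
      qed
      show ?thesis
      proof (cases "q v")
        case True
        have "\<forall>x\<in>A. \<forall>y\<in>V-A. (x,y)\<in>local_compl v E \<longleftrightarrow> p x \<and> (q y \<noteq> ((v,y)\<in>E))"
          
      proof (intro ballI)
        fix x y assume xy: "x\<in>A" "y\<in>V-A"
        have f0: "(x,y)\<in>E \<longleftrightarrow> p x \<and> q y" using pq xy by blast
        have f1: "(v,x)\<in>E \<longleftrightarrow> p x" using ex xy True by blast
        have fne: "x \<noteq> y" using xy by blast
        show "(x,y)\<in>local_compl v E \<longleftrightarrow> p x \<and> (q y \<noteq> ((v,y)\<in>E))" using f0 f1 fne by (auto simp: lc_mem)
      qed
        thus ?thesis by - (rule exI[where x=p], rule exI[where x="\<lambda>y. q y \<noteq> ((v,y)\<in>E)"], assumption)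
      next
        case False
        have "\<forall>x\<in>A. \<forall>y\<in>V-A. (x,y)\<in>local_compl v E \<longleftrightarrow> p x \<and> q y"
          
      proof (intro ballI)
        fix x y assume xy: "x\<in>A" "y\<in>V-A"
        have f0: "(x,y)\<in>E \<longleftrightarrow> p x \<and> q y" using pq xy by blast
        have f1: "(v,x)\<notin>E" using ex xy False by blast
        have fne: "x \<noteq> y" using xy by blast
        show "(x,y)\<in>local_compl v E \<longleftrightarrow> p x \<and> q y" using f0 f1 fne by (auto simp: lc_mem)
      qed
        thus ?thesis by - (rule exI[where x=p], rule exI[where x=q], assumption)
      qed
    qed
  qed
  thus ?thesis using b by (intro split_prod[THEN iffD2] conjI)
qed

lemma split_lc_iff:
  assumes g0: "is_graph V E"
  shows "is_split V (local_compl v E) A \<longleftrightarrow> is_split V E A"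
proof
  have g: "is_graph V (local_compl v E)" using lc_graph[OF g0] .
  have s1: "sym (local_compl v E)" "local_compl v E \<subseteq> V \<times> V" using g unfolding is_graph_def by simp_all
  have s0: "sym E" "E \<subseteq> V \<times> V" "(v,v)\<notin>E" using g0 unfolding is_graph_def by simp_all
  assume "is_split V (local_compl v E) A"
  then have "is_split V (local_compl v (local_compl v E)) A"
    using split_lc[OF s1] by blast
  thus "is_split V E A" using lc_invol[OF s0(3)] by simp
next
  have s0: "sym E" "E \<subseteq> V \<times> V" using g0 unfolding is_graph_def by simp_all
  assume "is_split V E A" thus "is_split V (local_compl v E) A"
    using split_lc[OF s0] by blast
qed

lemma strong_lc:
  assumes "is_graph V E"
  shows "strong_splits V (local_compl v E) = strong_splits V E"
  unfolding strong_splits_def strong_split_def using split_lc_iff[OF assms] by simp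

lemma nodes_eq:
  assumes "strong_splits V E = strong_splits V F"
  shows "split_nodes V E = split_nodes V F"
proof -
  have "\<And>A. strong_split V E A = strong_split V F A" using assms unfolding strong_splits_def by blast
  hence "nt_strong_sides V E = nt_strong_sides V F" unfolding nt_strong_sides_def by simp
  thus ?thesis unfolding split_nodes_def by simp
qed



definition cutp :: "'a set \<Rightarrow> ('a \<times> 'a) set \<Rightarrow> 'a set \<Rightarrow> bool" where
  "cutp V E X \<longleftrightarrow> (\<forall>x\<in>X. \<forall>y\<in>V - X.
        ((\<exists>y'\<in>V - X. (x, y') \<in> E) \<and> (\<exists>x'\<in>X. (x', y) \<in> E)) \<longrightarrow> (x, y) \<in> E)"

lemma cutD: "cutp V E X \<Longrightarrow> x\<in>X \<Longrightarrow> y\<in>V \<Longrightarrow> y\<notin>X \<Longrightarrow> y'\<in>V \<Longrightarrow> y'\<notin>X \<Longrightarrow> (x,y')\<in>E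
  \<Longrightarrow> x'\<in>X \<Longrightarrow> (x',y)\<in>E \<Longrightarrow> (x,y)\<in>E"
  unfolding cutp_def by blast

lemma quot_mem: "(X,Y)\<in>quotient_graph E P \<longleftrightarrow> X\<in>P \<and> Y\<in>P \<and> X\<noteq>Y \<and> (\<exists>x\<in>X. \<exists>y\<in>Y. (x,y)\<in>E)"
  unfolding quotient_graph_def by simp

lemma quot_step:
  assumes s: "sym G" and irr: "\<forall>x. (x,x)\<notin>G" and sub: "G \<subseteq> V\<times>V"
    and un: "\<Union>P = V" and disj: "\<forall>X\<in>P. \<forall>Y\<in>P. X \<noteq> Y \<longrightarrow> X \<inter> Y = {}"
    and cut: "\<forall>X\<in>P. cutp V G X"
    and Xv: "Xv \<in> P" "v \<in> Xv"
  shows "quotient_graph (local_compl v G) P = quotient_graph G P \<or>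
         quotient_graph (local_compl v G) P = local_compl Xv (quotient_graph G P)"
proof -
  let ?G' = "local_compl v G"
  let ?Q = "quotient_graph G P" and ?Q' = "quotient_graph ?G' P"
  have sG: "\<And>x y. (x,y)\<in>G \<Longrightarrow> (y,x)\<in>G" using s unfolding sym_def by blast
  have inV: "\<And>X x. X\<in>P \<Longrightarrow> x\<in>X \<Longrightarrow> x\<in>V" using un by blast
  have dj: "\<And>X Y x. X\<in>P \<Longrightarrow> Y\<in>P \<Longrightarrow> x\<in>X \<Longrightarrow> x\<in>Y \<Longrightarrow> X = Y" using disj by blast
  have vV: "v\<in>V" using inV Xv by blast
  have G'm: "\<And>x y. (x,y)\<in>?G' \<longleftrightarrow> (((x,y)\<in>G) \<noteq> ((v,x)\<in>G \<and> (v,y)\<in>G \<and> x \<noteq> y))"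
    by (rule lc_mem)
  show ?thesis
  proof (cases "\<exists>u\<in>V-Xv. (v,u)\<in>G")
    case False
    have pt: "\<And>X Y x y. X\<in>P \<Longrightarrow> Y\<in>P \<Longrightarrow> X\<noteq>Y \<Longrightarrow> x\<in>X \<Longrightarrow> y\<in>Y \<Longrightarrow> (x,y)\<in>?G' \<longleftrightarrow> (x,y)\<in>G"
    proof -
      fix X Y x y assume h: "X\<in>P" "Y\<in>P" "X\<noteq>Y" "x\<in>X" "y\<in>Y"
      have "\<not> ((v,x)\<in>G \<and> (v,y)\<in>G)"
      proof
        assume "(v,x)\<in>G \<and> (v,y)\<in>G"
        then have "x\<in>Xv" "y\<in>Xv" using False sub by blast+
        then have "X = Xv" "Y = Xv" using dj h Xv by metis+
        thus False using h by simp
      qed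
      thus "(x,y)\<in>?G' \<longleftrightarrow> (x,y)\<in>G" using G'm by blast
    qed
    have "?Q' = ?Q"
    proof (rule set_eqI)
      fix p show "p \<in> ?Q' \<longleftrightarrow> p \<in> ?Q"
      proof (cases p)
        case (Pair X Y)
        show ?thesis unfolding Pair quot_mem using pt by blast
      qed
    qed
    thus ?thesis by simp
  next
    case True
    then obtain u where u: "u\<in>V" "u\<notin>Xv" "(v,u)\<in>G" by blast
    have ca: "\<And>Y x y. Y\<in>P \<Longrightarrow> Y\<noteq>Xv \<Longrightarrow> x\<in>Xv \<Longrightarrow> y\<in>Y \<Longrightarrow> (x,y)\<in>G \<Longrightarrow> (v,y)\<in>G"
    proof -
      fix Y x y assume h: "Y\<in>P" "Y\<noteq>Xv" "x\<in>Xv" "y\<in>Y" "(x,y)\<in>G"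
      have "y \<in> V" "y \<notin> Xv" using h inV dj Xv by metis+
      show "(v,y)\<in>G" using cutD[of V G Xv v y u x] cut Xv u h \<open>y\<in>V\<close> \<open>y\<notin>Xv\<close> by blast
    qed
    have nb: "\<And>Y. (Xv,Y)\<in>?Q \<longleftrightarrow> Y\<in>P \<and> Y\<noteq>Xv \<and> (\<exists>y\<in>Y. (v,y)\<in>G)"
      unfolding quot_mem using ca Xv by blast
    have pXv: "\<And>Y. Y\<in>P \<Longrightarrow> Y\<noteq>Xv \<Longrightarrow> (\<exists>x\<in>Xv. \<exists>y\<in>Y. (x,y)\<in>?G') \<longleftrightarrow> (\<exists>x\<in>Xv. \<exists>y\<in>Y. (x,y)\<in>G)"
    proof -
      fix Y assume h: "Y\<in>P" "Y\<noteq>Xv"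
      show "(\<exists>x\<in>Xv. \<exists>y\<in>Y. (x,y)\<in>?G') \<longleftrightarrow> (\<exists>x\<in>Xv. \<exists>y\<in>Y. (x,y)\<in>G)"
      proof
        assume "\<exists>x\<in>Xv. \<exists>y\<in>Y. (x,y)\<in>?G'"
        then obtain x y where "x\<in>Xv" "y\<in>Y" "(x,y)\<in>?G'" by blast
        thus "\<exists>x\<in>Xv. \<exists>y\<in>Y. (x,y)\<in>G" using G'm Xv by blast
      next
        assume "\<exists>x\<in>Xv. \<exists>y\<in>Y. (x,y)\<in>G"
        then obtain x y where "x\<in>Xv" "y\<in>Y" "(x,y)\<in>G" by blast
        then have "(v,y)\<in>G" using ca h by blast
        then have "(v,y)\<in>?G'" using lc_nbhd irr by metis
        thus "\<exists>x\<in>Xv. \<exists>y\<in>Y. (x,y)\<in>?G'" using Xv \<open>y\<in>Y\<close> by blast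
      qed
    qed
    have sG': "\<And>x y. (x,y)\<in>?G' \<Longrightarrow> (y,x)\<in>?G'" using lc_sym[OF s] unfolding sym_def by blast
    have pXv2: "\<And>Y. Y\<in>P \<Longrightarrow> Y\<noteq>Xv \<Longrightarrow> (\<exists>y\<in>Y. \<exists>x\<in>Xv. (y,x)\<in>?G') \<longleftrightarrow> (\<exists>y\<in>Y. \<exists>x\<in>Xv. (y,x)\<in>G)"
    proof -
      fix Y assume h: "Y\<in>P" "Y\<noteq>Xv"
      have "(\<exists>y\<in>Y. \<exists>x\<in>Xv. (y,x)\<in>?G') \<longleftrightarrow> (\<exists>x\<in>Xv. \<exists>y\<in>Y. (x,y)\<in>?G')" using sG' by blast
      also have "\<dots> \<longleftrightarrow> (\<exists>x\<in>Xv. \<exists>y\<in>Y. (x,y)\<in>G)" using pXv h by blast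
      also have "\<dots> \<longleftrightarrow> (\<exists>y\<in>Y. \<exists>x\<in>Xv. (y,x)\<in>G)" using sG by blast
      finally show "(\<exists>y\<in>Y. \<exists>x\<in>Xv. (y,x)\<in>?G') \<longleftrightarrow> (\<exists>y\<in>Y. \<exists>x\<in>Xv. (y,x)\<in>G)" .
    qed
    have pOther: "\<And>X Y. X\<in>P \<Longrightarrow> Y\<in>P \<Longrightarrow> X\<noteq>Y \<Longrightarrow> X\<noteq>Xv \<Longrightarrow> Y\<noteq>Xv \<Longrightarrow>
        (\<exists>x\<in>X. \<exists>y\<in>Y. (x,y)\<in>?G') \<longleftrightarrow>
        ((\<exists>x\<in>X. \<exists>y\<in>Y. (x,y)\<in>G) \<noteq> ((\<exists>x\<in>X. (v,x)\<in>G) \<and> (\<exists>y\<in>Y. (v,y)\<in>G)))"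
    proof -
      fix X Y assume h: "X\<in>P" "Y\<in>P" "X\<noteq>Y" "X\<noteq>Xv" "Y\<noteq>Xv"
      have vX: "v\<notin>X" "v\<notin>Y" using h dj Xv by metis+
      have neq: "\<And>x y. x\<in>X \<Longrightarrow> y\<in>Y \<Longrightarrow> x\<noteq>y" using h dj by metis
      have yX: "\<And>y. y\<in>Y \<Longrightarrow> y\<notin>X" and xY: "\<And>x. x\<in>X \<Longrightarrow> x\<notin>Y" using h dj by metis+
      show "(\<exists>x\<in>X. \<exists>y\<in>Y. (x,y)\<in>?G') \<longleftrightarrow>
        ((\<exists>x\<in>X. \<exists>y\<in>Y. (x,y)\<in>G) \<noteq> ((\<exists>x\<in>X. (v,x)\<in>G) \<and> (\<exists>y\<in>Y. (v,y)\<in>G)))"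
      proof (cases "(\<exists>x\<in>X. (v,x)\<in>G) \<and> (\<exists>y\<in>Y. (v,y)\<in>G)")
        case False
        then have "\<And>x y. x\<in>X \<Longrightarrow> y\<in>Y \<Longrightarrow> (x,y)\<in>?G' \<longleftrightarrow> (x,y)\<in>G" using G'm by blast
        thus ?thesis using False by blast
      next
        case True
        then obtain x1 y1 where xy1: "x1\<in>X" "(v,x1)\<in>G" "y1\<in>Y" "(v,y1)\<in>G" by blast
        show ?thesis
        proof (cases "\<exists>x\<in>X. \<exists>y\<in>Y. (x,y)\<in>G")
          case False
          then have "(x1,y1)\<in>?G'" using G'm xy1 neq by blast
          thus ?thesis using xy1 False True by blast
        next
          case ex: True
          then obtain x0 y0 where e0: "x0\<in>X" "y0\<in>Y" "(x0,y0)\<in>G" by blast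
          have K: "\<And>x y. x\<in>X \<Longrightarrow> y\<in>Y \<Longrightarrow> (x,y)\<in>G \<longleftrightarrow> (v,x)\<in>G \<and> (v,y)\<in>G"
          proof -
            fix x y assume xy: "x\<in>X" "y\<in>Y"
            have xV: "x\<in>V" "y\<in>V" using xy h inV by blast+
            show "(x,y)\<in>G \<longleftrightarrow> (v,x)\<in>G \<and> (v,y)\<in>G"
            proof
              assume e: "(x,y)\<in>G"
              have "(x,v)\<in>G" using cutD[of V G X x v y x1] cut h xy vV vX xV yX e xy1 sG by blast
              moreover have "(y,v)\<in>G" using cutD[of V G Y y v x y1] cut h xy vV vX xV xY e xy1 sG by blast
              ultimately show "(v,x)\<in>G \<and> (v,y)\<in>G" using sG by blast
            next
              assume e: "(v,x)\<in>G \<and> (v,y)\<in>G"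
              have "(x,y0)\<in>G" using cutD[of V G X x y0 v x0] cut h xy vV vX e0 inV yX e sG by blast
              then have "(y,x)\<in>G" using cutD[of V G Y y x v y0] cut h xy vV vX e0 xV xY e sG by blast
              thus "(x,y)\<in>G" using sG by blast
            qed
          qed
          have "\<not> (\<exists>x\<in>X. \<exists>y\<in>Y. (x,y)\<in>?G')"
          proof
            assume "\<exists>x\<in>X. \<exists>y\<in>Y. (x,y)\<in>?G'"
            then obtain x y where "x\<in>X" "y\<in>Y" "(x,y)\<in>?G'" by blast
            thus False using K[of x y] G'm[of x y] neq[of x y] by blast
          qed
          thus ?thesis using ex True by blast
        qed
      qed
    qed
    have "?Q' = local_compl Xv ?Q"
    proof (rule set_eqI)
      fix p show "p \<in> ?Q' \<longleftrightarrow> p \<in> local_compl Xv ?Q"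
      proof (cases p)
        case (Pair X Y)
        have r: "(X,Y) \<in> local_compl Xv ?Q \<longleftrightarrow> (((X,Y)\<in>?Q) \<noteq> ((Xv,X)\<in>?Q \<and> (Xv,Y)\<in>?Q \<and> X \<noteq> Y))"
          by (rule lc_mem)
        show ?thesis
        proof (cases "X\<in>P \<and> Y\<in>P \<and> X\<noteq>Y")
          case False
          thus ?thesis unfolding Pair r by (auto simp: quot_mem)
        next
          case True
          show ?thesis
          proof (cases "X = Xv")
            case True
            thus ?thesis unfolding Pair r using \<open>X\<in>P \<and> Y\<in>P \<and> X\<noteq>Y\<close> pXv[of Y] by (auto simp: quot_mem)
          next
            case nX: False
            show ?thesis
            proof (cases "Y = Xv")
              case True
              thus ?thesis unfolding Pair r using \<open>X\<in>P \<and> Y\<in>P \<and> X\<noteq>Y\<close> pXv2[of X] by (auto simp: quot_mem)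
            next
              case False
              have "(Xv,X)\<in>?Q \<longleftrightarrow> (\<exists>x\<in>X. (v,x)\<in>G)" "(Xv,Y)\<in>?Q \<longleftrightarrow> (\<exists>y\<in>Y. (v,y)\<in>G)"
                using nb nX False \<open>X\<in>P \<and> Y\<in>P \<and> X\<noteq>Y\<close> by blast+
              thus ?thesis unfolding Pair r using \<open>X\<in>P \<and> Y\<in>P \<and> X\<noteq>Y\<close> pOther[of X Y] nX False
                by (simp add: quot_mem)
            qed
          qed
        qed
      qed
    qed
    thus ?thesis by simp
  qed
qed



lemma cut_nodes:
  assumes "P \<in> split_nodes V G"
  shows "\<forall>X\<in>P. cutp V G X"
proof
  fix X assume X: "X \<in> P"
  have "card X = 1 \<or> X \<in> nt_strong_sides V G" using assms X unfolding split_nodes_def by blast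
  thus "cutp V G X"
  proof
    assume "card X = 1"
    then obtain x where "X = {x}" using card_1_singletonE by blast
    thus ?thesis unfolding cutp_def by blast
  next
    assume "X \<in> nt_strong_sides V G"
    then have "is_split V G X" unfolding nt_strong_sides_def strong_split_def by blast
    thus ?thesis unfolding cutp_def is_split_def by blast
  qed
qed

lemma step_qa:
  assumes g: "is_graph V G" and P: "P \<in> split_nodes V G" and v: "v \<in> V"
  shows "loc_equiv P (quotient_graph G P) (quotient_graph (local_compl v G) P)"
proof -
  have part: "is_partition V P" using P unfolding split_nodes_def by blast
  have un: "\<Union>P = V" and disj: "\<forall>X\<in>P. \<forall>Y\<in>P. X \<noteq> Y \<longrightarrow> X \<inter> Y = {}"
    using part unfolding is_partition_def by blast+
  obtain Xv where Xv: "Xv \<in> P" "v \<in> Xv" using un v by blast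
  have gg: "sym G" "\<forall>x. (x,x)\<notin>G" "G \<subseteq> V\<times>V" using g unfolding is_graph_def by blast+
  have "quotient_graph (local_compl v G) P = quotient_graph G P \<or>
         quotient_graph (local_compl v G) P = local_compl Xv (quotient_graph G P)"
    by (rule quot_step[OF gg un disj cut_nodes[OF P] Xv])
  thus ?thesis
  proof
    assume "quotient_graph (local_compl v G) P = quotient_graph G P"
    thus ?thesis unfolding loc_equiv_def by simp
  next
    assume e: "quotient_graph (local_compl v G) P = local_compl Xv (quotient_graph G P)"
    have "(quotient_graph G P, local_compl Xv (quotient_graph G P)) \<in> {(E, local_compl v E) | E v. v \<in> P}"
      using Xv by blast
    thus ?thesis unfolding loc_equiv_def e by blast
  qed
qed

lemma R_step: "(H, H') \<in> {(E, local_compl v E) | E v. v \<in> V} \<Longrightarrow> \<exists>v. v \<in> V \<and> H' = local_compl v H"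
  by blast

lemma loc_inv:
  assumes g: "is_graph V G" and l: "loc_equiv V G H"
  shows "is_graph V H \<and> strong_splits V H = strong_splits V G \<and>
     (\<forall>P\<in>split_nodes V G. loc_equiv P (quotient_graph G P) (quotient_graph H P))"
  using l[unfolded loc_equiv_def]
proof (induction rule: rtrancl_induct)
  case base
  then show ?case using g by (simp add: loc_equiv_def)
next
  case (step H H')
  from R_step[OF step(2)] obtain v where v: "v \<in> V" "H' = local_compl v H" by blast
  have gH: "is_graph V H" using step.IH by (rule conjunct1)
  have ss: "strong_splits V H = strong_splits V G" using step.IH by simp
  have lq: "\<forall>P\<in>split_nodes V G. loc_equiv P (quotient_graph G P) (quotient_graph H P)" using step.IH by (simp add: loc_equiv_def)
  have nd: "split_nodes V G = split_nodes V H" using nodes_eq[OF ss] by simp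
  have A: "\<forall>P\<in>split_nodes V G. loc_equiv P (quotient_graph G P) (quotient_graph H' P)"
  proof
    fix P assume P: "P \<in> split_nodes V G"
    have "loc_equiv P (quotient_graph H P) (quotient_graph H' P)"
      using step_qa[OF gH _ v(1), of P] P nd v(2) by simp
    moreover have "loc_equiv P (quotient_graph G P) (quotient_graph H P)" using lq P by simp
    ultimately show "loc_equiv P (quotient_graph G P) (quotient_graph H' P)"
      unfolding loc_equiv_def by (rule rtrancl_trans[rotated])
  qed
  have B: "is_graph V H'" using lc_graph[OF gH] v(2) by simp
  have C: "strong_splits V H' = strong_splits V G" using strong_lc[OF gH, of v] v(2) ss by simp
  show ?case using A B C by simp
qed

lemma loc_qa:
  assumes g: "is_graph V G" and l: "loc_equiv V G H"
  shows "qasst_equiv V G H"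
proof -
  note h = loc_inv[OF g l]
  show ?thesis unfolding qasst_equiv_def using g h by simp
qed

lemma loc_sym:
  assumes g: "is_graph V G" and l: "loc_equiv V G H"
  shows "loc_equiv V H G"
  using l[unfolded loc_equiv_def]
proof (induction rule: rtrancl_induct)
  case base
  then show ?case by (simp add: loc_equiv_def)
next
  case (step H H')
  from R_step[OF step(2)] obtain v where v: "v \<in> V" "H' = local_compl v H" by blast
  have "is_graph V H" using loc_inv[OF g, of H] step(1) unfolding loc_equiv_def by simp
  then have "(v,v) \<notin> H" unfolding is_graph_def by simp
  then have "H = local_compl v H'" using lc_invol[of v H] v(2) by simp
  then have r: "(H', H) \<in> {(E, local_compl v E) | E v. v \<in> V}" using v(1) by blast
  have "(H, G) \<in> {(E, local_compl v E) | E v. v \<in> V}\<^sup>*" using step.IH unfolding loc_equiv_def .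
  then show ?case unfolding loc_equiv_def using r by (rule converse_rtrancl_into_rtrancl[rotated])
qed

lemma qa_trans:
  assumes ab: "qasst_equiv V A B" and bc: "qasst_equiv V B C"
  shows "qasst_equiv V A C"
proof -
  have e: "strong_splits V A = strong_splits V B" "strong_splits V B = strong_splits V C"
    using ab bc unfolding qasst_equiv_def by simp_all
  have n: "split_nodes V A = split_nodes V B" using nodes_eq[OF e(1)] .
  have l1: "\<forall>P\<in>split_nodes V A. loc_equiv P (quotient_graph A P) (quotient_graph B P)"
    using ab unfolding qasst_equiv_def by simp
  have l2: "\<forall>P\<in>split_nodes V A. loc_equiv P (quotient_graph B P) (quotient_graph C P)"
    using bc n unfolding qasst_equiv_def by simp
  have l3: "\<forall>P\<in>split_nodes V A. loc_equiv P (quotient_graph A P) (quotient_graph C P)"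
  proof
    fix P assume "P \<in> split_nodes V A"
    then have "loc_equiv P (quotient_graph A P) (quotient_graph B P)"
      "loc_equiv P (quotient_graph B P) (quotient_graph C P)" using l1 l2 by simp_all
    thus "loc_equiv P (quotient_graph A P) (quotient_graph C P)"
      unfolding loc_equiv_def by (rule rtrancl_trans)
  qed
  have "is_graph V A" "is_graph V C" using ab bc unfolding qasst_equiv_def by simp_all
  thus ?thesis unfolding qasst_equiv_def using e l3 by simp
qed

theorem corollary3:
  fixes V :: "'a set" and k :: nat and G :: "nat \<Rightarrow> ('a \<times> 'a) set"
  assumes "finite V"
    and "k \<ge> 1"
    and "\<forall>i\<in>{1..k}. is_graph V (G i)"
    and "\<forall>i\<in>{1..k}. \<forall>j\<in>{1..k}. i \<noteq> j \<longrightarrow> qasst_equiv V (G i) (G j)"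
    and "\<forall>i\<in>{1..k}. \<forall>j\<in>{1..k}. i \<noteq> j \<longrightarrow> \<not> loc_equiv V (G i) (G j)"
    and "\<forall>H. qasst_equiv V (G 1) H \<longrightarrow> (\<exists>i\<in>{1..k}. loc_equiv V H (G i))"
  shows "(\<Sum>i=1..k. card (orbit V (G i))) = Phi V (G 1)"
proof -
  have one: "1 \<in> {1..k}" using assms(2) by simp
  have fin: "\<forall>i\<in>{1..k}. finite (orbit V (G i))"
  proof
    fix i assume i: "i \<in> {1..k}"
    have "orbit V (G i) \<subseteq> Pow (V \<times> V)"
    proof
      fix H assume "H \<in> orbit V (G i)"
      then have "loc_equiv V (G i) H" unfolding orbit_def by simp
      then have "is_graph V H" using loc_inv[of V "G i" H] assms(3) i by simp
      thus "H \<in> Pow (V \<times> V)" unfolding is_graph_def by simp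
    qed
    thus "finite (orbit V (G i))" using assms(1) finite_subset by blast
  qed
  have dis: "\<forall>i\<in>{1..k}. \<forall>j\<in>{1..k}. i \<noteq> j \<longrightarrow> orbit V (G i) \<inter> orbit V (G j) = {}"
  proof (intro ballI impI)
    fix i j assume ij: "i \<in> {1..k}" "j \<in> {1..k}" "i \<noteq> j"
    show "orbit V (G i) \<inter> orbit V (G j) = {}"
    proof (rule ccontr)
      assume "orbit V (G i) \<inter> orbit V (G j) \<noteq> {}"
      then obtain H where h1: "loc_equiv V (G i) H" and h2: "loc_equiv V (G j) H" unfolding orbit_def by blast
      have h3: "loc_equiv V H (G j)" using loc_sym[of V "G j" H] assms(3) ij h2 by simp
      have "loc_equiv V (G i) (G j)" using h1 h3 unfolding loc_equiv_def by (rule rtrancl_trans)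
      thus False using assms(5) ij by blast
    qed
  qed
  have eq: "{H. qasst_equiv V (G 1) H} = (\<Union>i\<in>{1..k}. orbit V (G i))"
  proof
    show "{H. qasst_equiv V (G 1) H} \<subseteq> (\<Union>i\<in>{1..k}. orbit V (G i))"
    proof
      fix H assume "H \<in> {H. qasst_equiv V (G 1) H}"
      then have q: "qasst_equiv V (G 1) H" by simp
      then obtain i where i: "i \<in> {1..k}" "loc_equiv V H (G i)" using assms(6) by blast
      have "is_graph V H" using q unfolding qasst_equiv_def by blast
      then have "loc_equiv V (G i) H" using loc_sym[of V H "G i"] i by simp
      thus "H \<in> (\<Union>i\<in>{1..k}. orbit V (G i))" using i unfolding orbit_def by blast
    qed
  next
    show "(\<Union>i\<in>{1..k}. orbit V (G i)) \<subseteq> {H. qasst_equiv V (G 1) H}"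
    proof
      fix H assume "H \<in> (\<Union>i\<in>{1..k}. orbit V (G i))"
      then obtain i where i: "i \<in> {1..k}" "loc_equiv V (G i) H" unfolding orbit_def by blast
      have q: "qasst_equiv V (G i) H" using loc_qa[of V "G i" H] assms(3) i by simp
      show "H \<in> {H. qasst_equiv V (G 1) H}"
      proof (cases "i = 1")
        case True thus ?thesis using q by simp
      next
        case False
        then have "qasst_equiv V (G 1) (G i)" using assms(4) one i(1) by simp
        thus ?thesis using qa_trans[OF _ q] by simp
      qed
    qed
  qed
  have "card (\<Union>i\<in>{1..k}. orbit V (G i)) = (\<Sum>i\<in>{1..k}. card (orbit V (G i)))"
    by (rule card_UN_disjoint[OF finite_atLeastAtMost fin dis])
  thus ?thesis unfolding Phi_def eq by simp
qed


end
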